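(* If a topological space $X$ has a $\pi$-tree, then the Tychonoff products $X\times\mathcal{N}$, $X\times\mathcal{R}_{\mathcal{S}}$ and $X\times\mathcal{R}_{\mathcal{S}}^{\,\omega}$ also have a $\pi$-tree.
   Context: $\mathcal{N}$ is the Baire space ${}^{\omega}\omega$ with the product topology ($\omega$ discrete); $\mathcal{R}_{\mathcal{S}}$ is the Sorgenfrey line (reals with the topology generated by $[a,b)$), and $\mathcal{R}_{\mathcal{S}}^{\,\omega}$ its countable Tychonoff power. Neighbourhoods are not necessarily open. ${}^{<\omega}\omega$ is the set of finite sequences of natural numbers. A tree is a strict partial order in which the set of predecessors of every node is well-ordered; a branch is a maximal chain; $\mathrm{sons}(x)$ is the set of immediate successors of $x$; $0$ denotes the least node. A foliage tree is a pair $\mathbf{F}=(T,l)$ with $T$ a tree (skeleton) and $l$ a function on its nodes, $\mathbf{F}_x:=l(x)$; tree notions apply via the skeleton. $\mathrm{shoot}_{\mathbf{F}}(v)=\{\bigcup_{x\in C}\mathbf{F}_x: C\text{ a cofinite subset of }\mathrm{sons}_{\mathbf{F}}(v)\}$; $\mathrm{scope}_{\mathbf{F}}(p)=\{x:p\in\mathbf{F}_x\}$. $\gamma\gg\delta$ means every nonempty $D\in\delta$ contains some nonempty $G\in\gamma$. $\mathbf{F}$ is locally strict if each non-maximal leaf $\mathbf{F}_x$ is the disjoint union of $\mathbf{F}_s$, $s\in\mathrm{sons}(x)$; has strict branches if it has a node and for each branch $B$, $\bigcap_{x\in B}\mathbf{F}_x$ is a singleton; is open in $X$ if all leaves are open in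 $X$; is a foliage $\omega,\omega$-tree if its skeleton is order-isomorphic to $({}^{<\omega}\omega,\subsetneq)$. A Baire foliage tree on $X$ is an open in $X$, locally strict foliage $\omega,\omega$-tree with strict branches and $\mathbf{F}_{0_{\mathbf{F}}}=X$. $\mathbf{F}$ grows into $X$ if for every $p\in X$ and neighbourhood $U$ of $p$ there is $z\in\mathrm{scope}_{\mathbf{F}}(p)$ with $\mathrm{shoot}_{\mathbf{F}}(z)\gg\{U\}$. A $\pi$-tree on $X$ is a Baire foliage tree on $X$ that grows into $X$; a space has a $\pi$-tree if there is one on it. *)

theory Defs
  imports "HOL-Analysis.Analysis" "HOL-Library.Sublist"
begin

text \<open>Foliage omega,omega-trees are represented with the canonical skeleton
  (finite sequences of naturals, ordered by strict prefix); the leaf function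
  is l :: nat list => 'a set.\<close>

definition sons :: "nat list \<Rightarrow> nat list set" where
  "sons x = {y. strict_prefix x y \<and> \<not> (\<exists>z. strict_prefix x z \<and> strict_prefix z y)}"

definition is_chain :: "nat list set \<Rightarrow> bool" where
  "is_chain C \<longleftrightarrow> (\<forall>x\<in>C. \<forall>y\<in>C. x = y \<or> strict_prefix x y \<or> strict_prefix y x)"

definition is_branch :: "nat list set \<Rightarrow> bool" where
  "is_branch B \<longleftrightarrow> is_chain B \<and> \<not> (\<exists>C. is_chain C \<and> B \<subset> C)"

definition shoot :: "(nat list \<Rightarrow> 'a set) \<Rightarrow> nat list \<Rightarrow> 'a set set" where
  "shoot l v = {\<Union> (l ` C) | C. C \<subseteq> sons v \<and> finite (sons v - C)}"

definition scope :: "(nat list \<Rightarrow> 'a set) \<Rightarrow> 'a \<Rightarrow> nat list set" where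
  "scope l p = {x. p \<in> l x}"

definition gg :: "'a set set \<Rightarrow> 'a set set \<Rightarrow> bool" (infix "\<ggreater>" 50) where
  "\<gamma> \<ggreater> \<delta> \<longleftrightarrow> (\<forall>D\<in>\<delta>. D \<noteq> {} \<longrightarrow> (\<exists>G\<in>\<gamma>. G \<noteq> {} \<and> G \<subseteq> D))"

definition locally_strict :: "(nat list \<Rightarrow> 'a set) \<Rightarrow> bool" where
  "locally_strict l \<longleftrightarrow> (\<forall>x. sons x \<noteq> {} \<longrightarrow>
      l x = \<Union> (l ` sons x) \<and>
      (\<forall>s\<in>sons x. \<forall>t\<in>sons x. s \<noteq> t \<longrightarrow> l s \<inter> l t = {}))"

definition strict_branches :: "(nat list \<Rightarrow> 'a set) \<Rightarrow> bool" where
  "strict_branches l \<longleftrightarrow> (\<forall>B. is_branch B \<longrightarrow> (\<exists>p. \<Inter> (l ` B) = {p}))"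

definition is_neighbourhood :: "'a topology \<Rightarrow> 'a \<Rightarrow> 'a set \<Rightarrow> bool" where
  "is_neighbourhood X p U \<longleftrightarrow> U \<subseteq> topspace X \<and> (\<exists>V. openin X V \<and> p \<in> V \<and> V \<subseteq> U)"

definition baire_foliage_tree :: "'a topology \<Rightarrow> (nat list \<Rightarrow> 'a set) \<Rightarrow> bool" where
  "baire_foliage_tree X l \<longleftrightarrow> (\<forall>x. openin X (l x)) \<and> locally_strict l \<and>
      strict_branches l \<and> l [] = topspace X"

definition grows_into :: "(nat list \<Rightarrow> 'a set) \<Rightarrow> 'a topology \<Rightarrow> bool" where
  "grows_into l X \<longleftrightarrow> (\<forall>p\<in>topspace X. \<forall>U. is_neighbourhood X p U \<longrightarrow>
      (\<exists>z\<in>scope l p. shoot l z \<ggreater> {U}))"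

definition pi_tree :: "'a topology \<Rightarrow> (nat list \<Rightarrow> 'a set) \<Rightarrow> bool" where
  "pi_tree X l \<longleftrightarrow> baire_foliage_tree X l \<and> grows_into l X"

definition has_pi_tree :: "'a topology \<Rightarrow> bool" where
  "has_pi_tree X \<longleftrightarrow> (\<exists>l. pi_tree X l)"

definition baire_space :: "(nat \<Rightarrow> nat) topology" where
  "baire_space = product_topology (\<lambda>_. discrete_topology UNIV) UNIV"

definition sorgenfrey :: "real topology" where
  "sorgenfrey = topology_generated_by {{a..<b} | a b. True}"

definition sorgenfrey_power :: "(nat \<Rightarrow> real) topology" where
  "sorgenfrey_power = product_topology (\<lambda>_. sorgenfrey) UNIV"

end

theory Submission
  imports Defs "HOL-Library.Nat_Bijection"
begin

definition pre :: "(nat \<Rightarrow> nat) \<Rightarrow> nat \<Rightarrow> nat list" where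
  "pre f n = map f [0..<n]"

lemma pre_Suc: "pre f (Suc n) = pre f n @ [f n]"
  by (simp add: pre_def)
lemma length_pre[simp]: "length (pre f n) = n"
  by (simp add: pre_def)
lemma nth_pre[simp]: "i < n \<Longrightarrow> pre f n ! i = f i"
  by (simp add: pre_def)
lemma pre_0[simp]: "pre f 0 = []" by (simp add: pre_def)
lemma pre_eq_iff: "pre f n = pre g n \<longleftrightarrow> (\<forall>i<n. f i = g i)"
  unfolding list_eq_iff_nth_eq by auto
lemma pre_eq_list_iff: "pre f (length x) = x \<longleftrightarrow> (\<forall>i<length x. f i = x ! i)"
  unfolding list_eq_iff_nth_eq by auto

lemma sons_eq: "sons x = range (\<lambda>n. x @ [n])"
proof (intro set_eqI iffI)
  fix y assume "y \<in> sons x"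
  then have sp: "strict_prefix x y" and no: "\<not> (\<exists>z. strict_prefix x z \<and> strict_prefix z y)"
    by (auto simp: sons_def)
  then obtain c where y: "y = x @ c" and c: "c \<noteq> []"
    by (auto simp: strict_prefix_def prefix_def)
  then obtain a c' where c': "c = a # c'" by (cases c) auto
  have "c' = []"
  proof (rule ccontr)
    assume "c' \<noteq> []"
    then have "strict_prefix x (x @ [a]) \<and> strict_prefix (x @ [a]) y"
      using y c' by (auto simp: strict_prefix_def prefix_def)
    with no show False by blast
  qed
  then show "y \<in> range (\<lambda>n. x @ [n])" using y c' by auto
next
  fix y assume "y \<in> range (\<lambda>n. x @ [n])"
  then obtain n where y: "y = x @ [n]" by auto
  show "y \<in> sons x"
    unfolding sons_def
  proof (safe)
    show "strict_prefix x y" using y by (auto simp: strict_prefix_def)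
  next
    fix z assume "strict_prefix x z" "strict_prefix z y"
    then have "length x < length z" "length z < length y"
      by (auto simp: prefix_length_less)
    then show False using y by simp
  qed
qed

lemma comparable_same_length:
  "(x = y \<or> strict_prefix x y \<or> strict_prefix y x) \<Longrightarrow> length x = length y \<Longrightarrow> x = y"
  using prefix_length_less by fastforce

lemma comparable_le_prefix:
  "(x = y \<or> strict_prefix x y \<or> strict_prefix y x) \<Longrightarrow> length x \<le> length y \<Longrightarrow> prefix x y"
  using prefix_length_less by fastforce

lemma is_branch_pre: "is_branch (range (pre f))"
  unfolding is_branch_def
proof (intro conjI notI)
  show "is_chain (range (pre f))"
    unfolding is_chain_def
  proof (intro ballI)
    fix u v assume "u \<in> range (pre f)" "v \<in> range (pre f)"
    then obtain m n where uv: "u = pre f m" "v = pre f n" by auto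
    have "prefix (pre f m) (pre f n)" if "m \<le> n" for m n
    proof -
      have "[0..<n] = [0..<m] @ [m..<n]" using that by (metis le0 upt_add_eq_append le_add_diff_inverse)
      then show ?thesis by (auto simp: pre_def prefix_def)
    qed
    then show "u = v \<or> strict_prefix u v \<or> strict_prefix v u"
      unfolding uv by (metis nat_le_linear strict_prefix_def)
  qed
next
  assume "\<exists>C. is_chain C \<and> range (pre f) \<subset> C"
  then obtain C y where C: "is_chain C" "range (pre f) \<subseteq> C" "y \<in> C" "y \<notin> range (pre f)"
    by blast
  have "pre f (length y) \<in> C" using C by auto
  moreover have "\<forall>u\<in>C. \<forall>v\<in>C. u = v \<or> strict_prefix u v \<or> strict_prefix v u"
    using C(1) unfolding is_chain_def .
  ultimately have "y = pre f (length y) \<or> strict_prefix y (pre f (length y)) \<or> strict_prefix (pre f (length y)) y"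
    using C(3) by blast
  then have "y = pre f (length y)"
    using comparable_same_length[of y "pre f (length y)"] by simp
  with C show False by auto
qed

lemma branch_all_lengths:
  assumes "is_branch B" shows "\<exists>y\<in>B. length y = n"
proof (induction n)
  have ch: "is_chain B" and mx: "\<And>C. is_chain C \<Longrightarrow> \<not> B \<subset> C" using assms by (auto simp: is_branch_def)
  case 0
  have "is_chain (insert [] B)" using ch
    unfolding is_chain_def by (auto simp: strict_prefix_def)
  then have "[] \<in> B" using mx[of "insert [] B"] by blast
  then show ?case by auto
next
  have ch: "is_chain B" and mx: "\<And>C. is_chain C \<Longrightarrow> \<not> B \<subset> C" using assms by (auto simp: is_branch_def)
  case (Suc n)
  then obtain x where x: "x \<in> B" "length x = n" by auto
  show ?case
  proof (cases "\<exists>y\<in>B. length y > n")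
    case True
    then obtain y where y: "y \<in> B" "length y > n" by auto
    let ?t = "take (Suc n) y"
    have "is_chain (insert ?t B)"
      unfolding is_chain_def
    proof (intro ballI)
      fix u v assume "u \<in> insert ?t B" "v \<in> insert ?t B"
      have key: "z = ?t \<or> strict_prefix z ?t \<or> strict_prefix ?t z" if "z \<in> B" for z
      proof -
        have zy: "z = y \<or> strict_prefix z y \<or> strict_prefix y z" using ch that y unfolding is_chain_def by blast
        have "prefix ?t y" by (simp add: take_is_prefix)
        from zy have "prefix z y \<or> prefix y z" by (auto simp: strict_prefix_def)
        then have "prefix z ?t \<or> prefix ?t z"
        proof
          assume "prefix z y" then show ?thesis using prefix_same_cases[OF _ \<open>prefix ?t y\<close>] by blast
        next
          assume "prefix y z" then show ?thesis using \<open>prefix ?t y\<close> prefix_order.trans by blast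
        qed
        then show ?thesis by (auto simp: strict_prefix_def)
      qed
      show "u = v \<or> strict_prefix u v \<or> strict_prefix v u"
        using \<open>u \<in> _\<close> \<open>v \<in> _\<close> key ch unfolding is_chain_def by blast
    qed
    then have "?t \<in> B" using mx[of "insert ?t B"] by blast
    then show ?thesis using y by (intro bexI[of _ ?t]) auto
  next
    case False
    let ?t = "x @ [0]"
    have "is_chain (insert ?t B)"
      unfolding is_chain_def
    proof (intro ballI)
      fix u v assume "u \<in> insert ?t B" "v \<in> insert ?t B"
      have key: "z = ?t \<or> strict_prefix z ?t \<or> strict_prefix ?t z" if "z \<in> B" for z
      proof -
        have "z = x \<or> strict_prefix z x \<or> strict_prefix x z" using ch that x unfolding is_chain_def by blast
        moreover have "length z \<le> length x" using False that x by auto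
        ultimately have "prefix z x" using comparable_le_prefix by blast
        then have "strict_prefix z ?t" by (auto simp: strict_prefix_def prefix_def)
        then show ?thesis by blast
      qed
      show "u = v \<or> strict_prefix u v \<or> strict_prefix v u"
        using \<open>u \<in> _\<close> \<open>v \<in> _\<close> key ch unfolding is_chain_def by blast
    qed
    then have "?t \<in> B" using mx[of "insert ?t B"] by blast
    then show ?thesis using x by (intro bexI[of _ ?t]) auto
  qed
qed

lemma branch_is_pre:
  assumes "is_branch B" shows "\<exists>f. B = range (pre f)"
proof -
  have ch: "is_chain B" using assms by (auto simp: is_branch_def)
  define g where "g n = (SOME y. y \<in> B \<and> length y = n)" for n
  have g: "g n \<in> B \<and> length (g n) = n" for n
    using branch_all_lengths[OF assms, of n] unfolding g_def by (metis (mono_tags, lifting) someI_ex)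
  define f where "f n = g (Suc n) ! n" for n
  have eq: "y = pre f (length y)" if "y \<in> B" for y
  proof (rule nth_equalityI)
    fix i assume i: "i < length y"
    have "y = g (Suc i) \<or> strict_prefix y (g (Suc i)) \<or> strict_prefix (g (Suc i)) y"
      using ch that g unfolding is_chain_def by blast
    moreover have "length (g (Suc i)) \<le> length y" using g[of "Suc i"] i by simp
    ultimately have "prefix (g (Suc i)) y" using comparable_le_prefix[of "g (Suc i)" y] by blast
    then obtain zs where "y = g (Suc i) @ zs" by (auto simp: prefix_def)
    then have "y ! i = g (Suc i) ! i" using g[of "Suc i"] by (simp add: nth_append)
    then show "y ! i = pre f (length y) ! i" using i by (simp add: f_def)
  qed simp
  have "B = range (pre f)"
  proof
    show "B \<subseteq> range (pre f)" using eq by blast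
    show "range (pre f) \<subseteq> B"
    proof
      fix z assume "z \<in> range (pre f)"
      then obtain n where "z = pre f n" by auto
      then show "z \<in> B" using eq[of "g n"] g[of n] by auto
    qed
  qed
  then show ?thesis by blast
qed

definition lphi :: "('b \<Rightarrow> nat \<Rightarrow> nat) \<Rightarrow> 'b set \<Rightarrow> nat list \<Rightarrow> 'b set" where
  "lphi \<phi> S x = {s\<in>S. \<forall>i<length x. \<phi> s i = x ! i}"

definition good :: "('b \<Rightarrow> nat \<Rightarrow> nat) \<Rightarrow> 'b set \<Rightarrow> 'b \<Rightarrow> 'b set \<Rightarrow> nat \<Rightarrow> bool" where
  "good \<phi> S p U n \<longleftrightarrow> (\<exists>N. \<forall>s\<in>S. (\<forall>i<n. \<phi> s i = \<phi> p i) \<and> N \<le> \<phi> s n \<longrightarrow> s \<in> U)"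

lemma lphi_root[simp]: "lphi \<phi> S [] = S"
  by (simp add: lphi_def)

lemma lphi_snoc: "lphi \<phi> S (x @ [n]) = {s \<in> lphi \<phi> S x. \<phi> s (length x) = n}"
  unfolding lphi_def by (auto simp: nth_append less_Suc_eq)

lemma mem_lphi_pre: "s \<in> lphi \<phi> S (pre f n) \<longleftrightarrow> s \<in> S \<and> (\<forall>i<n. \<phi> s i = f i)"
  unfolding lphi_def by auto

lemma lphi_subset: "lphi \<phi> S x \<subseteq> S"
  unfolding lphi_def by auto

lemma good_mono: "good \<phi> S p U n \<Longrightarrow> U \<subseteq> U' \<Longrightarrow> good \<phi> S p U' n"
  unfolding good_def by blast

lemma lphi_tree:
  assumes bij: "bij_betw \<phi> (topspace X) UNIV" and op: "\<And>x. openin X (lphi \<phi> (topspace X) x)"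
  shows "baire_foliage_tree X (lphi \<phi> (topspace X))"
proof -
  let ?S = "topspace X"
  let ?l = "lphi \<phi> ?S"
  have ls: "locally_strict ?l"
    unfolding locally_strict_def sons_eq
  proof (intro allI impI conjI ballI)
    fix x
    show "?l x = \<Union> (?l ` range (\<lambda>n. x @ [n]))"
    proof
      show "?l x \<subseteq> \<Union> (?l ` range (\<lambda>n. x @ [n]))"
      proof
        fix s assume "s \<in> ?l x"
        then have "s \<in> ?l (x @ [\<phi> s (length x)])" by (simp add: lphi_snoc)
        then show "s \<in> \<Union> (?l ` range (\<lambda>n. x @ [n]))" by blast
      qed
      show "\<Union> (?l ` range (\<lambda>n. x @ [n])) \<subseteq> ?l x" by (auto simp: lphi_snoc)
    qed
    fix s t assume "s \<in> range (\<lambda>n. x @ [n])" "t \<in> range (\<lambda>n. x @ [n])" "s \<noteq> t"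
    then obtain n m where "s = x @ [n]" "t = x @ [m]" "n \<noteq> m" by auto
    then show "?l s \<inter> ?l t = {}" by (auto simp: lphi_snoc)
  qed
  have sb: "strict_branches ?l"
    unfolding strict_branches_def
  proof (intro allI impI)
    fix B assume "is_branch B"
    then obtain f where B: "B = range (pre f)" using branch_is_pre by blast
    have "f \<in> \<phi> ` ?S" using bij unfolding bij_betw_def by simp
    then obtain p where p: "p \<in> ?S" "\<phi> p = f" by blast
    have "\<Inter> (?l ` B) = {p}"
    proof
      show "\<Inter> (?l ` B) \<subseteq> {p}"
      proof
        fix s assume s: "s \<in> \<Inter> (?l ` B)"
        then have "s \<in> ?l (pre f (Suc i))" for i using B by blast
        then have sS: "s \<in> ?S" and "\<phi> s i = f i" for i by (auto simp: mem_lphi_pre)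
        then have "\<phi> s = \<phi> p" using p by auto
        then have "s = p" using bij sS p unfolding bij_betw_def inj_on_def by blast
        then show "s \<in> {p}" by simp
      qed
      show "{p} \<subseteq> \<Inter> (?l ` B)" using p B by (auto simp: mem_lphi_pre)
    qed
    then show "\<exists>p. \<Inter> (?l ` B) = {p}" by blast
  qed
  show ?thesis unfolding baire_foliage_tree_def using op ls sb by simp
qed

lemma lphi_grows:
  assumes bij: "bij_betw \<phi> (topspace X) UNIV"
    and gr: "\<And>p U. p \<in> topspace X \<Longrightarrow> is_neighbourhood X p U \<Longrightarrow> \<exists>n. good \<phi> (topspace X) p U n"
  shows "grows_into (lphi \<phi> (topspace X)) X"
  unfolding grows_into_def
proof (intro ballI allI impI)
  let ?S = "topspace X"
  let ?l = "lphi \<phi> ?S"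
  fix p U assume p: "p \<in> ?S" and U: "is_neighbourhood X p U"
  obtain n N where nN: "\<And>s. s \<in> ?S \<Longrightarrow> (\<forall>i<n. \<phi> s i = \<phi> p i) \<Longrightarrow> N \<le> \<phi> s n \<Longrightarrow> s \<in> U"
    using gr[OF p U] unfolding good_def by blast
  let ?z = "pre (\<phi> p) n"
  have zs: "?z \<in> scope ?l p" using p by (simp add: scope_def mem_lphi_pre)
  let ?C = "(\<lambda>i. ?z @ [i]) ` {N..}"
  have Csub: "?C \<subseteq> sons ?z" by (auto simp: sons_eq)
  have "sons ?z - ?C \<subseteq> (\<lambda>i. ?z @ [i]) ` {..<N}"
  proof
    fix y assume "y \<in> sons ?z - ?C"
    then obtain i where "y = ?z @ [i]" "i \<notin> {N..}" by (auto simp: sons_eq)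
    then show "y \<in> (\<lambda>i. ?z @ [i]) ` {..<N}" by auto
  qed
  then have Cfin: "finite (sons ?z - ?C)" using finite_subset by blast
  define f where "f = (\<phi> p)(n := N)"
  have "f \<in> \<phi> ` ?S" using bij unfolding bij_betw_def by simp
  then obtain s where s: "s \<in> ?S" "\<phi> s = f" by blast
  have "\<forall>i<n. \<phi> s i = \<phi> p i" using s by (simp add: f_def)
  moreover have "\<phi> s n = N" using s by (simp add: f_def)
  ultimately have "s \<in> ?l (?z @ [N])" using s by (simp add: lphi_snoc mem_lphi_pre)
  moreover have "?z @ [N] \<in> ?C" by simp
  ultimately have ne: "\<Union> (?l ` ?C) \<noteq> {}" by (metis UN_I empty_iff)
  have sub: "\<Union> (?l ` ?C) \<subseteq> U"
  proof
    fix t assume "t \<in> \<Union> (?l ` ?C)"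
    then obtain i where i: "N \<le> i" "t \<in> ?l (?z @ [i])" by auto
    then have "t \<in> ?S" "\<forall>j<n. \<phi> t j = \<phi> p j" "\<phi> t n = i"
      by (simp_all add: lphi_snoc mem_lphi_pre)
    then show "t \<in> U" using nN[of t] i(1) by simp
  qed
  have "\<exists>C. \<Union> (?l ` ?C) = \<Union> (?l ` C) \<and> C \<subseteq> sons ?z \<and> finite (sons ?z - C)"
    by (intro exI[of _ ?C]) (simp add: Csub Cfin)
  then have G: "\<Union> (?l ` ?C) \<in> shoot ?l ?z" unfolding shoot_def by (rule CollectI)
  have "shoot ?l ?z \<ggreater> {U}" unfolding gg_def
    by (intro ballI impI bexI[OF _ G]) (use ne sub in auto)
  then show "\<exists>z\<in>scope ?l p. shoot ?l z \<ggreater> {U}" using zs by blast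
qed

lemma pi_tree_from_phi:
  assumes bij: "bij_betw \<phi> (topspace X) UNIV" and op: "\<And>x. openin X (lphi \<phi> (topspace X) x)"
    and gr: "\<And>p U. p \<in> topspace X \<Longrightarrow> is_neighbourhood X p U \<Longrightarrow> \<exists>n. good \<phi> (topspace X) p U n"
  shows "has_pi_tree X"
  unfolding has_pi_tree_def pi_tree_def using lphi_tree[OF bij op] lphi_grows[OF bij gr] by blast

primrec path :: "(nat list \<Rightarrow> 'b set) \<Rightarrow> 'b \<Rightarrow> nat \<Rightarrow> nat list" where
  "path l p 0 = []"
| "path l p (Suc n) = path l p n @ [SOME i. p \<in> l (path l p n @ [i])]"

lemma length_path[simp]: "length (path l p n) = n"
  by (induction n) auto

lemma tree_to_phi:
  assumes T: "baire_foliage_tree X l"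
  shows "\<exists>\<phi>. bij_betw \<phi> (topspace X) UNIV \<and> l = lphi \<phi> (topspace X)"
proof -
  let ?S = "topspace X"
  have ls: "\<forall>x. sons x \<noteq> {} \<longrightarrow> l x = \<Union> (l ` sons x) \<and> (\<forall>s\<in>sons x. \<forall>t\<in>sons x. s \<noteq> t \<longrightarrow> l s \<inter> l t = {})"
    using T unfolding baire_foliage_tree_def locally_strict_def by simp
  have sne: "sons x \<noteq> {}" for x by (simp add: sons_eq)
  have LS: "l x = (\<Union>n. l (x @ [n]))" for x
  proof -
    have "l x = \<Union> (l ` sons x)" using ls[rule_format, OF sne[of x]] by (rule conjunct1)
    then show ?thesis by (simp add: sons_eq image_image)
  qed
  have DJ: "n \<noteq> m \<Longrightarrow> l (x @ [n]) \<inter> l (x @ [m]) = {}" for x n m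
  proof -
    assume nm: "n \<noteq> m"
    have "\<forall>s\<in>sons x. \<forall>t\<in>sons x. s \<noteq> t \<longrightarrow> l s \<inter> l t = {}" using ls[rule_format, OF sne[of x]] by (rule conjunct2)
    moreover have "x @ [n] \<in> sons x" "x @ [m] \<in> sons x" by (simp_all add: sons_eq)
    ultimately show ?thesis using nm by simp
  qed
  have root: "l [] = ?S" using T unfolding baire_foliage_tree_def by simp
  have SB: "\<And>B. is_branch B \<Longrightarrow> \<exists>p. \<Inter> (l ` B) = {p}"
    using T unfolding baire_foliage_tree_def strict_branches_def by blast
  have mono1: "l (x @ [n]) \<subseteq> l x" for x n by (subst LS[of x]) blast
  have sub: "l x \<subseteq> ?S" for x
  proof (induction x rule: rev_induct)
    case Nil then show ?case using root by simp
  next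
    case (snoc a x) then show ?case using mono1[of x a] by blast
  qed
  have disj: "length x = length y \<Longrightarrow> x \<noteq> y \<Longrightarrow> l x \<inter> l y = {}" for x y
  proof (induction x arbitrary: y rule: rev_induct)
    case Nil then show ?case by simp
  next
    case (snoc a x)
    have "y \<noteq> []" using snoc.prems by auto
    then obtain y' b where y: "y = y' @ [b]" by (cases y rule: rev_cases) auto
    have len: "length x = length y'" using snoc.prems y by simp
    show ?case
    proof (cases "x = y'")
      case True
      then have "a \<noteq> b" using snoc.prems y by simp
      then show ?thesis using DJ y True by simp
    next
      case False
      then have "l x \<inter> l y' = {}" using snoc.IH len by blast
      moreover have "l (x @ [a]) \<subseteq> l x" "l (y' @ [b]) \<subseteq> l y'" by (rule mono1)+
      ultimately show ?thesis unfolding y by blast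
    qed
  qed
  have inpath: "p \<in> ?S \<Longrightarrow> p \<in> l (path l p n)" for p n
  proof (induction n)
    case 0 then show ?case using root by simp
  next
    case (Suc n)
    then have "p \<in> (\<Union>i. l (path l p n @ [i]))" using LS[of "path l p n"] by simp
    then have "\<exists>i. p \<in> l (path l p n @ [i])" by simp
    then obtain i where "p \<in> l (path l p n @ [i])" by blast
    then have "p \<in> l (path l p n @ [SOME i. p \<in> l (path l p n @ [i])])" by (rule someI)
    then show ?case by simp
  qed
  define \<phi> where "\<phi> p i = path l p (Suc i) ! i" for p i
  have pathpre: "path l p n = pre (\<phi> p) n" for p n
  proof (induction n)
    case 0 then show ?case by simp
  next
    case (Suc n) then show ?case by (simp add: pre_Suc \<phi>_def nth_append)
  qed
  have leq: "l = lphi \<phi> ?S"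
  proof
    fix x
    show "l x = lphi \<phi> ?S x"
    proof
      show "l x \<subseteq> lphi \<phi> ?S x"
      proof
        fix s assume s: "s \<in> l x"
        then have sS: "s \<in> ?S" using sub by blast
        have "s \<in> l (path l s (length x))" using inpath[OF sS] .
        then have "path l s (length x) = x" using disj[of "path l s (length x)" x] s by fastforce
        then have "pre (\<phi> s) (length x) = x" using pathpre by simp
        then show "s \<in> lphi \<phi> ?S x" using sS unfolding lphi_def pre_eq_list_iff by simp
      qed
      show "lphi \<phi> ?S x \<subseteq> l x"
      proof
        fix s assume s: "s \<in> lphi \<phi> ?S x"
        then have sS: "s \<in> ?S" and "pre (\<phi> s) (length x) = x" unfolding lphi_def pre_eq_list_iff by auto
        then have "path l s (length x) = x" using pathpre by simp
        then show "s \<in> l x" using inpath[OF sS, of "length x"] by simp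
      qed
    qed
  qed
  have inj: "inj_on \<phi> ?S"
  proof
    fix s t assume s: "s \<in> ?S" and t: "t \<in> ?S" and eq: "\<phi> s = \<phi> t"
    obtain p where p: "\<Inter> (l ` range (pre (\<phi> s))) = {p}" using SB[OF is_branch_pre[of "\<phi> s"]] by (elim exE)
    have "s \<in> l (pre (\<phi> s) n)" for n using inpath[OF s, of n] pathpre[of s n] by simp
    then have s1: "s \<in> \<Inter> (l ` range (pre (\<phi> s)))" by blast
    have "t \<in> l (pre (\<phi> s) n)" for n using inpath[OF t, of n] pathpre[of t n] eq by simp
    then have t1: "t \<in> \<Inter> (l ` range (pre (\<phi> s)))" by blast
    have "s \<in> {p}" "t \<in> {p}" using s1 t1 unfolding p .
    then show "s = t" by simp
  qed
  have surj: "\<phi> ` ?S = UNIV"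
  proof (intro set_eqI iffI)
    fix f :: "nat \<Rightarrow> nat"
    obtain p where p: "\<Inter> (l ` range (pre f)) = {p}" using SB[OF is_branch_pre[of f]] by (elim exE)
    have "p \<in> \<Inter> (l ` range (pre f))" unfolding p by simp
    then have pin: "p \<in> l (pre f n)" for n by blast
    then have pS: "p \<in> ?S" using sub by blast
    have "\<phi> p i = f i" for i using pin[of "Suc i"] unfolding leq by (simp add: mem_lphi_pre)
    then have "\<phi> p = f" by auto
    then show "f \<in> \<phi> ` ?S" using pS by blast
  qed simp
  have "bij_betw \<phi> ?S UNIV" using inj surj by (simp add: bij_betw_def)
  from this leq show ?thesis by (intro exI[of _ \<phi>] conjI)
qed

lemma grows_to_good:
  assumes bij: "bij_betw \<phi> (topspace X) UNIV" and gr: "grows_into (lphi \<phi> (topspace X)) X"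
    and p: "p \<in> topspace X" and U: "is_neighbourhood X p U"
  shows "\<exists>n. good \<phi> (topspace X) p U n"
proof -
  let ?S = "topspace X"
  let ?l = "lphi \<phi> ?S"
  obtain z where z: "z \<in> scope ?l p" and sh: "shoot ?l z \<ggreater> {U}"
    using gr p U unfolding grows_into_def by blast
  have "p \<in> U" using U unfolding is_neighbourhood_def by blast
  then obtain G where G: "G \<in> shoot ?l z" "G \<subseteq> U" using sh unfolding gg_def by blast
  then obtain C where C: "G = \<Union> (?l ` C)" "C \<subseteq> sons z" "finite (sons z - C)"
    unfolding shoot_def by blast
  let ?n = "length z"
  have zp: "\<forall>i<?n. \<phi> p i = z ! i" using z unfolding scope_def lphi_def by simp
  have "finite ((\<lambda>i. z @ [i]) -` (sons z - C))"
    using C(3) by (rule finite_vimageI) (simp add: inj_on_def)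
  then obtain N where N: "\<And>i. i \<in> (\<lambda>i. z @ [i]) -` (sons z - C) \<Longrightarrow> i < N"
    using finite_nat_bounded by (metis lessThan_iff subsetD)
  have "\<forall>s\<in>?S. (\<forall>i<?n. \<phi> s i = \<phi> p i) \<and> N \<le> \<phi> s ?n \<longrightarrow> s \<in> U"
  proof (intro ballI impI)
    fix s assume s: "s \<in> ?S" "(\<forall>i<?n. \<phi> s i = \<phi> p i) \<and> N \<le> \<phi> s ?n"
    then have "z @ [\<phi> s ?n] \<in> C" using N[of "\<phi> s ?n"] by (auto simp: sons_eq)
    moreover have "s \<in> ?l z" using s zp unfolding lphi_def by simp
    then have "s \<in> ?l (z @ [\<phi> s ?n])" by (simp add: lphi_snoc)
    ultimately show "s \<in> U" using C(1) G(2) by blast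
  qed
  then show ?thesis unfolding good_def by blast
qed

lemma good_deep:
  assumes bij: "bij_betw \<phi> (topspace X) UNIV" and op: "\<And>x. openin X (lphi \<phi> (topspace X) x)"
    and gr: "\<And>p U. p \<in> topspace X \<Longrightarrow> is_neighbourhood X p U \<Longrightarrow> \<exists>n. good \<phi> (topspace X) p U n"
    and p: "p \<in> topspace X" and U: "is_neighbourhood X p U"
  shows "\<exists>n\<ge>K. good \<phi> (topspace X) p U n"
proof -
  let ?S = "topspace X"
  let ?L = "lphi \<phi> ?S (pre (\<phi> p) K)"
  obtain V where V: "openin X V" "p \<in> V" "V \<subseteq> U" and US: "U \<subseteq> ?S"
    using U unfolding is_neighbourhood_def by blast
  have "p \<in> ?L" using p by (simp add: mem_lphi_pre)
  then have U': "is_neighbourhood X p (U \<inter> ?L)"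
    unfolding is_neighbourhood_def using V US op[of "pre (\<phi> p) K"]
    by (intro conjI exI[of _ "V \<inter> ?L"]) auto
  obtain n N where nN: "\<And>s. s \<in> ?S \<Longrightarrow> (\<forall>i<n. \<phi> s i = \<phi> p i) \<Longrightarrow> N \<le> \<phi> s n \<Longrightarrow> s \<in> U \<inter> ?L"
    using gr[OF p U'] unfolding good_def by blast
  have "good \<phi> ?S p U n" unfolding good_def using nN by blast
  moreover have "K \<le> n"
  proof (rule ccontr)
    assume "\<not> K \<le> n"
    then have nK: "n < K" by simp
    define f where "f = (\<phi> p)(n := max N (Suc (\<phi> p n)))"
    have "f \<in> \<phi> ` ?S" using bij unfolding bij_betw_def by simp
    then obtain s where s: "s \<in> ?S" "\<phi> s = f" by blast
    have "\<forall>i<n. \<phi> s i = \<phi> p i" using s by (simp add: f_def)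
    moreover have "N \<le> \<phi> s n" using s by (simp add: f_def)
    ultimately have "s \<in> ?L" using nN s by blast
    then have "\<phi> s n = \<phi> p n" using nK by (simp add: mem_lphi_pre)
    moreover have "\<phi> s n > \<phi> p n" using s by (simp add: f_def)
    ultimately show False by simp
  qed
  ultimately show ?thesis by blast
qed

definition fib :: "nat \<Rightarrow> nat \<Rightarrow> nat list set" where
  "fib k t = {xs. length xs = Suc (Suc k) \<and> Min (set xs) = t}"

definition enc :: "nat \<Rightarrow> nat list \<Rightarrow> nat \<times> nat" where
  "enc k xs = (Min (set xs), to_nat_on (fib k (Min (set xs))) xs)"

definition dec :: "nat \<Rightarrow> nat \<times> nat \<Rightarrow> nat list" where
  "dec k v = from_nat_into (fib k (fst v)) (snd v)"

lemma fib_countable: "countable (fib k t)"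
  by (rule countable_subset[OF subset_UNIV]) simp

lemma fib_infinite: "infinite (fib k t)"
proof -
  let ?g = "\<lambda>m. t # (t + m) # replicate k t"
  have inj: "inj ?g" by (auto simp: inj_def)
  have "?g m \<in> fib k t" for m
  proof -
    have "Min (set (?g m)) = t"
      by (rule Min_eqI) auto
    then show ?thesis by (simp add: fib_def)
  qed
  then have "range ?g \<subseteq> fib k t" by blast
  moreover have "infinite (range ?g)" using inj by (simp add: range_inj_infinite)
  ultimately show ?thesis using finite_subset by blast
qed

lemma fib_ne: "fib k t \<noteq> {}" using fib_infinite by (metis finite.emptyI)

lemma dec_in: "dec k v \<in> fib k (fst v)"
  unfolding dec_def by (rule from_nat_into[OF fib_ne])

lemma length_dec[simp]: "length (dec k v) = Suc (Suc k)"
  using dec_in[of k v] by (simp add: fib_def)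

lemma Min_dec: "Min (set (dec k v)) = fst v"
  using dec_in[of k v] by (simp add: fib_def)

lemma enc_dec[simp]: "enc k (dec k v) = v"
proof -
  have "to_nat_on (fib k (fst v)) (dec k v) = snd v"
    unfolding dec_def using fib_countable fib_infinite by simp
  then show ?thesis unfolding enc_def Min_dec by simp
qed

lemma dec_enc: "length xs = Suc (Suc k) \<Longrightarrow> dec k (enc k xs) = xs"
proof -
  assume l: "length xs = Suc (Suc k)"
  then have "xs \<in> fib k (Min (set xs))" by (simp add: fib_def)
  then show ?thesis unfolding dec_def enc_def using fib_countable by simp
qed

lemma enc_inj: "length xs = Suc (Suc k) \<Longrightarrow> length ys = Suc (Suc k) \<Longrightarrow> enc k xs = enc k ys \<Longrightarrow> xs = ys"
  by (metis dec_enc)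

lemma enc_fst_le: "length xs = Suc (Suc k) \<Longrightarrow> x \<in> set xs \<Longrightarrow> fst (enc k xs) \<le> x"
  unfolding enc_def by simp

definition merge :: "(nat \<Rightarrow> nat \<times> nat) \<Rightarrow> nat \<Rightarrow> nat" where
  "merge h m = (if even m then fst (h (m div 2)) else snd (h (m div 2)))"

lemma merge_even[simp]: "merge h (2 * n) = fst (h n)"
  by (simp add: merge_def)
lemma merge_odd[simp]: "merge h (Suc (2 * n)) = snd (h n)"
  by (simp add: merge_def)

lemma merge_agree: "(\<forall>i<2 * n. merge h i = merge h' i) \<Longrightarrow> j < n \<Longrightarrow> h j = h' j"
proof -
  assume a: "\<forall>i<2 * n. merge h i = merge h' i" and j: "j < n"
  have "2 * j < 2 * n" "Suc (2 * j) < 2 * n" using j by auto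
  then have "merge h (2 * j) = merge h' (2 * j)" "merge h (Suc (2 * j)) = merge h' (Suc (2 * j))"
    using a by blast+
  then show "h j = h' j" by (simp add: prod_eq_iff)
qed

lemma merge_eq: "merge h = merge h' \<Longrightarrow> h = h'"
proof
  fix j assume "merge h = merge h'"
  then show "h j = h' j" using merge_agree[of "Suc j" h h' j] by simp
qed

lemma merge_surj: "merge (\<lambda>n. (g (2 * n), g (Suc (2 * n)))) = g"
proof
  fix m show "merge (\<lambda>n. (g (2 * n), g (Suc (2 * n)))) m = g m"
    by (cases "even m") (auto simp: merge_def elim!: evenE oddE)
qed

lemma merge_same_prefix:
  assumes "\<And>j. j < n \<Longrightarrow> h j = h' j" "i < 2 * n"
  shows "merge h i = merge h' i"
  using assms by (simp add: merge_def)

definition PE :: "('b \<Rightarrow> nat \<Rightarrow> nat) \<Rightarrow> 'b topology \<Rightarrow> bool" where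
  "PE \<gamma> Y \<longleftrightarrow> (\<forall>q\<in>topspace Y. \<forall>U. is_neighbourhood Y q U \<longrightarrow>
     (\<exists>M. \<forall>n\<ge>M. good \<gamma> (topspace Y) q U (2 * n)))"

definition PA :: "('b \<Rightarrow> nat \<Rightarrow> nat) \<Rightarrow> 'b topology \<Rightarrow> bool" where
  "PA \<gamma> Y \<longleftrightarrow> (\<forall>q\<in>topspace Y. \<forall>U. is_neighbourhood Y q U \<longrightarrow>
     (\<exists>M. \<forall>n\<ge>M. good \<gamma> (topspace Y) q U n))"

lemma PA_PE: "PA \<gamma> Y \<Longrightarrow> PE \<gamma> Y"
  unfolding PA_def PE_def
proof (intro ballI allI impI)
  fix q U assume a: "\<forall>q\<in>topspace Y. \<forall>U. is_neighbourhood Y q U \<longrightarrow> (\<exists>M. \<forall>n\<ge>M. good \<gamma> (topspace Y) q U n)"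
    and q: "q \<in> topspace Y" and U: "is_neighbourhood Y q U"
  then obtain M where M: "\<And>n. n \<ge> M \<Longrightarrow> good \<gamma> (topspace Y) q U n" by blast
  show "\<exists>M. \<forall>n\<ge>M. good \<gamma> (topspace Y) q U (2 * n)"
    by (rule exI[of _ M]) (auto intro: M)
qed

definition bl :: "('a \<Rightarrow> nat \<Rightarrow> nat) \<Rightarrow> ('b \<Rightarrow> nat \<Rightarrow> nat) \<Rightarrow> 'a \<times> 'b \<Rightarrow> nat \<Rightarrow> nat list" where
  "bl \<phi> \<gamma> z n = [\<phi> (fst z) n, \<gamma> (snd z) (2 * n), \<gamma> (snd z) (Suc (2 * n))]"

definition psi2 :: "('a \<Rightarrow> nat \<Rightarrow> nat) \<Rightarrow> ('b \<Rightarrow> nat \<Rightarrow> nat) \<Rightarrow> 'a \<times> 'b \<Rightarrow> nat \<Rightarrow> nat" where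
  "psi2 \<phi> \<gamma> z = merge (\<lambda>n. enc 1 (bl \<phi> \<gamma> z n))"

lemma length_bl[simp]: "length (bl \<phi> \<gamma> z n) = Suc (Suc 1)"
  by (simp add: bl_def)

lemma psi2_agree:
  assumes "\<forall>i<2 * n. psi2 \<phi> \<gamma> z i = psi2 \<phi> \<gamma> z' i"
  shows "\<forall>i<n. \<phi> (fst z) i = \<phi> (fst z') i" "\<forall>i<2 * n. \<gamma> (snd z) i = \<gamma> (snd z') i"
proof -
  have "enc 1 (bl \<phi> \<gamma> z j) = enc 1 (bl \<phi> \<gamma> z' j)" if "j < n" for j
    using merge_agree[OF assms[unfolded psi2_def] that] .
  then have e: "bl \<phi> \<gamma> z j = bl \<phi> \<gamma> z' j" if "j < n" for j
    using enc_inj[of "bl \<phi> \<gamma> z j" 1 "bl \<phi> \<gamma> z' j"] that by simp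
  then show "\<forall>i<n. \<phi> (fst z) i = \<phi> (fst z') i" by (simp add: bl_def)
  show "\<forall>i<2 * n. \<gamma> (snd z) i = \<gamma> (snd z') i"
  proof (intro allI impI)
    fix i assume i: "i < 2 * n"
    have "i div 2 < n" using i by simp
    then have E: "bl \<phi> \<gamma> z (i div 2) = bl \<phi> \<gamma> z' (i div 2)" by (rule e)
    show "\<gamma> (snd z) i = \<gamma> (snd z') i"
    proof (cases "even i")
      case True
      then have "i = 2 * (i div 2)" by simp
      then show ?thesis using E unfolding bl_def by (metis list.inject)
    next
      case False
      then have "i = Suc (2 * (i div 2))" by simp
      then show ?thesis using E unfolding bl_def by (metis list.inject)
    qed
  qed
qed

lemma psi2_bij:
  assumes bx: "bij_betw \<phi> S UNIV" and bY: "bij_betw \<gamma> T UNIV"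
  shows "bij_betw (psi2 \<phi> \<gamma>) (S \<times> T) UNIV"
  unfolding bij_betw_def
proof
  show "inj_on (psi2 \<phi> \<gamma>) (S \<times> T)"
  proof
    fix z z' assume z: "z \<in> S \<times> T" and z': "z' \<in> S \<times> T" and eq: "psi2 \<phi> \<gamma> z = psi2 \<phi> \<gamma> z'"
    have ag: "\<forall>i<2 * Suc n. psi2 \<phi> \<gamma> z i = psi2 \<phi> \<gamma> z' i" for n using eq by simp
    have "\<phi> (fst z) i = \<phi> (fst z') i" for i using psi2_agree(1)[OF ag[of i]] lessI by blast
    moreover have "\<gamma> (snd z) i = \<gamma> (snd z') i" for i
    proof -
      have "i < 2 * Suc i" by simp
      then show ?thesis using psi2_agree(2)[OF ag[of i]] by blast
    qed
    ultimately have "\<phi> (fst z) = \<phi> (fst z')" "\<gamma> (snd z) = \<gamma> (snd z')" by auto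
    then have "fst z = fst z'" "snd z = snd z'"
      using inj_onD[OF bij_betw_imp_inj_on[OF bx]] inj_onD[OF bij_betw_imp_inj_on[OF bY]] z z'
      by (auto simp: mem_Times_iff)
    then show "z = z'" by (simp add: prod_eq_iff)
  qed
  show "psi2 \<phi> \<gamma> ` (S \<times> T) = UNIV"
  proof (intro set_eqI iffI)
    fix g :: "nat \<Rightarrow> nat"
    define L where "L n = dec 1 (g (2 * n), g (Suc (2 * n)))" for n
    define f where "f n = L n ! 0" for n
    define g2 where "g2 m = L (m div 2) ! (if even m then 1 else 2)" for m
    have "f \<in> \<phi> ` S" using bx unfolding bij_betw_def by simp
    then obtain p where p: "p \<in> S" "\<phi> p = f" by blast
    have "g2 \<in> \<gamma> ` T" using bY unfolding bij_betw_def by simp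
    then obtain q where q: "q \<in> T" "\<gamma> q = g2" by blast
    have "bl \<phi> \<gamma> (p, q) n = L n" for n
    proof -
      have len: "length (L n) = 3" by (simp add: L_def)
      have "bl \<phi> \<gamma> (p, q) n = [L n ! 0, L n ! 1, L n ! 2]"
        using p q by (simp add: bl_def f_def g2_def)
      also have "\<dots> = L n" using len
        by (cases "L n" rule: list.exhaust; simp; rename_tac a xs; case_tac xs; simp; rename_tac b ys; case_tac ys; simp)
      finally show ?thesis .
    qed
    then have "psi2 \<phi> \<gamma> (p, q) = merge (\<lambda>n. (g (2 * n), g (Suc (2 * n))))"
      unfolding psi2_def by (simp add: L_def)
    also have "\<dots> = g" by (rule merge_surj)
    finally show "g \<in> psi2 \<phi> \<gamma> ` (S \<times> T)" using p q by force
  qed simp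
qed

lemma psi2_open:
  assumes opX: "\<And>x. openin X (lphi \<phi> (topspace X) x)" and opY: "\<And>x. openin Y (lphi \<gamma> (topspace Y) x)"
  shows "openin (prod_topology X Y) (lphi (psi2 \<phi> \<gamma>) (topspace (prod_topology X Y)) x)"
proof -
  let ?S = "topspace X" and ?T = "topspace Y"
  let ?L = "lphi (psi2 \<phi> \<gamma>) (?S \<times> ?T) x"
  let ?K = "length x"
  have "\<exists>B. openin (prod_topology X Y) B \<and> z0 \<in> B \<and> B \<subseteq> ?L" if z0: "z0 \<in> ?L" for z0
  proof -
    obtain s0 r0 where z0e: "z0 = (s0, r0)" by (cases z0)
    let ?B = "lphi \<phi> ?S (pre (\<phi> s0) ?K) \<times> lphi \<gamma> ?T (pre (\<gamma> r0) (2 * ?K))"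
    have inL: "z0 \<in> ?S \<times> ?T" "\<forall>i<?K. psi2 \<phi> \<gamma> z0 i = x ! i" using z0 unfolding lphi_def by auto
    have "openin (prod_topology X Y) ?B" using opX opY by (simp add: openin_prod_Times_iff)
    moreover have "z0 \<in> ?B" using inL z0e by (simp add: mem_lphi_pre)
    moreover have "?B \<subseteq> ?L"
    proof
      fix z assume z: "z \<in> ?B"
      obtain s r where ze: "z = (s, r)" by (cases z)
      have sr: "s \<in> ?S" "r \<in> ?T" "\<forall>i<?K. \<phi> s i = \<phi> s0 i" "\<forall>i<2 * ?K. \<gamma> r i = \<gamma> r0 i"
        using z ze by (auto simp: mem_lphi_pre)
      have "bl \<phi> \<gamma> z j = bl \<phi> \<gamma> z0 j" if "j < ?K" for j
      proof -
        have "2 * j < 2 * ?K" "Suc (2 * j) < 2 * ?K" using that by auto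
        then show ?thesis using sr that ze z0e by (simp add: bl_def)
      qed
      then have "psi2 \<phi> \<gamma> z i = psi2 \<phi> \<gamma> z0 i" if "i < ?K" for i
        unfolding psi2_def using that by (intro merge_same_prefix[where n="?K"]) auto
      then show "z \<in> ?L" using inL sr ze unfolding lphi_def by simp
    qed
    ultimately show ?thesis by blast
  qed
  then show ?thesis by (subst openin_subopen) simp
qed

lemma psi2_growth:
  assumes bX: "bij_betw \<phi> (topspace X) UNIV" and opX: "\<And>x. openin X (lphi \<phi> (topspace X) x)"
    and grX: "\<And>p U. p \<in> topspace X \<Longrightarrow> is_neighbourhood X p U \<Longrightarrow> \<exists>n. good \<phi> (topspace X) p U n"
    and pe: "PE \<gamma> Y"
    and z: "z \<in> topspace (prod_topology X Y)" and W: "is_neighbourhood (prod_topology X Y) z W"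
  shows "\<exists>n. good (psi2 \<phi> \<gamma>) (topspace (prod_topology X Y)) z W n"
proof -
  let ?S = "topspace X" and ?T = "topspace Y"
  obtain p q where ze: "z = (p, q)" by (cases z)
  have pq: "p \<in> ?S" "q \<in> ?T" using z ze by auto
  obtain V where V: "openin (prod_topology X Y) V" "z \<in> V" "V \<subseteq> W"
    using W unfolding is_neighbourhood_def by blast
  have "\<forall>x y. (x,y) \<in> V \<longrightarrow> (\<exists>U1 U2. openin X U1 \<and> openin Y U2 \<and> x \<in> U1 \<and> y \<in> U2 \<and> U1 \<times> U2 \<subseteq> V)"
    using V(1) unfolding openin_prod_topology_alt by blast
  then have "\<exists>U1 U2. openin X U1 \<and> openin Y U2 \<and> p \<in> U1 \<and> q \<in> U2 \<and> U1 \<times> U2 \<subseteq> V"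
    using V(2) ze by blast
  then obtain U1 U2 where U: "openin X U1" "openin Y U2" "p \<in> U1" "q \<in> U2" "U1 \<times> U2 \<subseteq> V"
    by blast
  have n1: "is_neighbourhood X p U1" unfolding is_neighbourhood_def
    using U openin_subset by blast
  have n2: "is_neighbourhood Y q U2" unfolding is_neighbourhood_def
    using U openin_subset by blast
  obtain M where M: "\<And>n. n \<ge> M \<Longrightarrow> good \<gamma> ?T q U2 (2 * n)"
    using pe pq n2 unfolding PE_def by blast
  obtain n where n: "n \<ge> M" "good \<phi> ?S p U1 n"
    using good_deep[OF bX opX grX pq(1) n1, of M] by blast
  obtain N1 where N1: "\<And>s. s \<in> ?S \<Longrightarrow> (\<forall>i<n. \<phi> s i = \<phi> p i) \<Longrightarrow> N1 \<le> \<phi> s n \<Longrightarrow> s \<in> U1"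
    using n(2) unfolding good_def by blast
  obtain N2 where N2: "\<And>r. r \<in> ?T \<Longrightarrow> (\<forall>i<2 * n. \<gamma> r i = \<gamma> q i) \<Longrightarrow> N2 \<le> \<gamma> r (2 * n) \<Longrightarrow> r \<in> U2"
    using M[OF n(1)] unfolding good_def by blast
  have "\<forall>w\<in>topspace (prod_topology X Y). (\<forall>i<2 * n. psi2 \<phi> \<gamma> w i = psi2 \<phi> \<gamma> z i) \<and>
           max N1 N2 \<le> psi2 \<phi> \<gamma> w (2 * n) \<longrightarrow> w \<in> W"
  proof (intro ballI impI)
    fix w assume w: "w \<in> topspace (prod_topology X Y)"
      and h: "(\<forall>i<2 * n. psi2 \<phi> \<gamma> w i = psi2 \<phi> \<gamma> z i) \<and> max N1 N2 \<le> psi2 \<phi> \<gamma> w (2 * n)"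
    obtain s r where we: "w = (s, r)" by (cases w)
    have sr: "s \<in> ?S" "r \<in> ?T" using w we by auto
    have a1: "\<forall>i<n. \<phi> s i = \<phi> p i" using psi2_agree(1)[of n \<phi> \<gamma> w z] h we ze by simp
    have a2: "\<forall>i<2 * n. \<gamma> r i = \<gamma> q i" using psi2_agree(2)[of n \<phi> \<gamma> w z] h we ze by simp
    have f: "psi2 \<phi> \<gamma> w (2 * n) = fst (enc 1 (bl \<phi> \<gamma> w n))" by (simp add: psi2_def)
    have "fst (enc 1 (bl \<phi> \<gamma> w n)) \<le> \<phi> s n"
      by (rule enc_fst_le) (simp_all add: bl_def we)
    moreover have "fst (enc 1 (bl \<phi> \<gamma> w n)) \<le> \<gamma> r (2 * n)"
      by (rule enc_fst_le) (simp_all add: bl_def we)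
    ultimately have "N1 \<le> \<phi> s n" "N2 \<le> \<gamma> r (2 * n)" using h f by auto
    then have "s \<in> U1" "r \<in> U2" using N1[OF sr(1) a1] N2[OF sr(2) a2] by auto
    then show "w \<in> W" using U(5) V(3) we by blast
  qed
  then show ?thesis unfolding good_def by blast
qed

theorem prod_pi:
  assumes bX: "bij_betw \<phi> (topspace X) UNIV" and opX: "\<And>x. openin X (lphi \<phi> (topspace X) x)"
    and grX: "\<And>p U. p \<in> topspace X \<Longrightarrow> is_neighbourhood X p U \<Longrightarrow> \<exists>n. good \<phi> (topspace X) p U n"
    and bY: "bij_betw \<gamma> (topspace Y) UNIV" and opY: "\<And>x. openin Y (lphi \<gamma> (topspace Y) x)"
    and pe: "PE \<gamma> Y"
  shows "has_pi_tree (prod_topology X Y)"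
proof (rule pi_tree_from_phi)
  show "bij_betw (psi2 \<phi> \<gamma>) (topspace (prod_topology X Y)) UNIV"
    using psi2_bij[OF bX bY] by simp
  show "openin (prod_topology X Y) (lphi (psi2 \<phi> \<gamma>) (topspace (prod_topology X Y)) x)" for x
    by (rule psi2_open[OF opX opY])
  show "\<exists>n. good (psi2 \<phi> \<gamma>) (topspace (prod_topology X Y)) z W n"
    if "z \<in> topspace (prod_topology X Y)" "is_neighbourhood (prod_topology X Y) z W" for z W
    by (rule psi2_growth[OF bX opX grX pe that])
qed

definition tl' :: "('z \<Rightarrow> nat \<Rightarrow> nat) \<Rightarrow> nat \<Rightarrow> (nat \<Rightarrow> 'z) \<Rightarrow> nat list" where
  "tl' \<gamma> n q = map (\<lambda>i. \<gamma> (q i) (n - (i - 1))) [0..<Suc (Suc n)]"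

definition psiw :: "('z \<Rightarrow> nat \<Rightarrow> nat) \<Rightarrow> (nat \<Rightarrow> 'z) \<Rightarrow> nat \<Rightarrow> nat" where
  "psiw \<gamma> q = merge (\<lambda>n. enc n (tl' \<gamma> n q))"

lemma length_tl'[simp]: "length (tl' \<gamma> n q) = Suc (Suc n)"
  by (simp add: tl'_def)

lemma nth_tl': "i < Suc (Suc n) \<Longrightarrow> tl' \<gamma> n q ! i = \<gamma> (q i) (n - (i - 1))"
  unfolding tl'_def by (simp del: upt_Suc add: nth_map_upt)

lemma coord_tl': "\<gamma> (q i) j = tl' \<gamma> (j + (i - 1)) q ! i"
proof -
  have "i < Suc (Suc (j + (i - 1)))" by simp
  then show ?thesis by (simp add: nth_tl')
qed

lemma psiw_agree:
  assumes "\<forall>i<2 * n. psiw \<gamma> q i = psiw \<gamma> q' i" "j + (i - 1) < n"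
  shows "\<gamma> (q i) j = \<gamma> (q' i) j"
proof -
  have "enc (j + (i - 1)) (tl' \<gamma> (j + (i - 1)) q) = enc (j + (i - 1)) (tl' \<gamma> (j + (i - 1)) q')"
    using merge_agree[OF assms(1)[unfolded psiw_def] assms(2)] .
  then have "tl' \<gamma> (j + (i - 1)) q = tl' \<gamma> (j + (i - 1)) q'"
    by (rule enc_inj[rotated 2]) simp_all
  then show ?thesis by (simp add: coord_tl'[of \<gamma> q i j] coord_tl'[of \<gamma> q' i j])
qed

lemma psiw_bij:
  assumes bZ: "bij_betw \<gamma> T UNIV"
  shows "bij_betw (psiw \<gamma>) (\<Pi>\<^sub>E i\<in>UNIV. T) UNIV"
  unfolding bij_betw_def
proof
  show "inj_on (psiw \<gamma>) (\<Pi>\<^sub>E i\<in>UNIV. T)"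
  proof
    fix q q' assume q: "q \<in> (\<Pi>\<^sub>E i\<in>UNIV. T)" and q': "q' \<in> (\<Pi>\<^sub>E i\<in>UNIV. T)" and eq: "psiw \<gamma> q = psiw \<gamma> q'"
    have "\<gamma> (q i) j = \<gamma> (q' i) j" for i j
    proof -
      have "\<forall>k<2 * Suc (j + (i - 1)). psiw \<gamma> q k = psiw \<gamma> q' k" using eq by simp
      then show ?thesis by (rule psiw_agree) simp
    qed
    then have "\<gamma> (q i) = \<gamma> (q' i)" for i by auto
    moreover have "q i \<in> T" "q' i \<in> T" for i using q q' by (simp_all add: PiE_iff)
    ultimately have "q i = q' i" for i
      using inj_onD[OF bij_betw_imp_inj_on[OF bZ]] by blast
    then show "q = q'" by auto
  qed
  show "psiw \<gamma> ` (\<Pi>\<^sub>E i\<in>UNIV. T) = UNIV"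
  proof (intro set_eqI iffI)
    fix g :: "nat \<Rightarrow> nat"
    define L where "L n = dec n (g (2 * n), g (Suc (2 * n)))" for n
    define G where "G i j = L (j + (i - 1)) ! i" for i j
    have "\<forall>i. \<exists>r. r \<in> T \<and> \<gamma> r = G i"
    proof
      fix i have "G i \<in> \<gamma> ` T" using bZ unfolding bij_betw_def by simp
      then obtain r where "r \<in> T" "G i = \<gamma> r" by (rule imageE)
      then show "\<exists>r. r \<in> T \<and> \<gamma> r = G i" by (intro exI[of _ r]) simp
    qed
    then have "\<exists>q. \<forall>i. q i \<in> T \<and> \<gamma> (q i) = G i" by (rule choice)
    then obtain q where "\<forall>i. q i \<in> T \<and> \<gamma> (q i) = G i" by (elim exE)
    then have q: "\<And>i. q i \<in> T" "\<And>i. \<gamma> (q i) = G i" by simp_all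
    have tlL: "tl' \<gamma> n q = L n" for n
    proof (rule nth_equalityI)
      show "length (tl' \<gamma> n q) = length (L n)" by (simp add: L_def)
      fix i assume "i < length (tl' \<gamma> n q)"
      then have i: "i < Suc (Suc n)" by simp
      then have "n - (i - 1) + (i - 1) = n" by simp
      have "tl' \<gamma> n q ! i = G i (n - (i - 1))" using i by (simp add: nth_tl' q(2))
      also have "\<dots> = L n ! i" unfolding G_def using \<open>n - (i - 1) + (i - 1) = n\<close> by simp
      finally show "tl' \<gamma> n q ! i = L n ! i" .
    qed
    have "enc n (tl' \<gamma> n q) = (g (2 * n), g (Suc (2 * n)))" for n
      unfolding tlL L_def by (rule enc_dec)
    then have "(\<lambda>n. enc n (tl' \<gamma> n q)) = (\<lambda>n. (g (2 * n), g (Suc (2 * n))))" by (rule ext)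
    then have "psiw \<gamma> q = merge (\<lambda>n. (g (2 * n), g (Suc (2 * n))))"
      unfolding psiw_def by (rule arg_cong)
    also have "\<dots> = g" by (rule merge_surj)
    finally have "g = psiw \<gamma> q" by simp
    moreover have "q \<in> (\<Pi>\<^sub>E i\<in>UNIV. T)" using q(1) by (simp add: PiE_iff)
    ultimately show "g \<in> psiw \<gamma> ` (\<Pi>\<^sub>E i\<in>UNIV. T)" by (rule image_eqI)
  qed simp
qed

lemma psiw_same_prefix:
  assumes "\<And>i j. i \<le> K \<Longrightarrow> j < K \<Longrightarrow> \<gamma> (q i) j = \<gamma> (q0 i) j" "m < K"
  shows "psiw \<gamma> q m = psiw \<gamma> q0 m"
proof -
  have "tl' \<gamma> st q = tl' \<gamma> st q0" if st: "st < K" for st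
  proof (rule nth_equalityI)
    fix i assume "i < length (tl' \<gamma> st q)"
    then have i: "i < Suc (Suc st)" by simp
    then have "i \<le> K" "st - (i - 1) < K" using st by auto
    then show "tl' \<gamma> st q ! i = tl' \<gamma> st q0 ! i" using i assms(1) by (simp add: nth_tl')
  qed simp
  then show ?thesis unfolding psiw_def using assms(2)
    by (intro merge_same_prefix[where n=K]) auto
qed

lemma psiw_open:
  assumes opZ: "\<And>x. openin Z (lphi \<gamma> (topspace Z) x)"
  shows "openin (product_topology (\<lambda>_. Z) UNIV) (lphi (psiw \<gamma>) (topspace (product_topology (\<lambda>_. Z) UNIV)) x)"
proof -
  let ?Y = "product_topology (\<lambda>_::nat. Z) UNIV"
  let ?T = "topspace Z"
  let ?L = "lphi (psiw \<gamma>) (topspace ?Y) x"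
  let ?K = "length x"
  have "\<exists>B. openin ?Y B \<and> q0 \<in> B \<and> B \<subseteq> ?L" if q0: "q0 \<in> ?L" for q0
  proof -
    define X where "X i = (if i \<le> ?K then lphi \<gamma> ?T (pre (\<gamma> (q0 i)) ?K) else ?T)" for i
    have inL: "q0 \<in> topspace ?Y" "\<forall>i<?K. psiw \<gamma> q0 i = x ! i" using q0 unfolding lphi_def by auto
    have q0T: "q0 i \<in> ?T" for i using inL(1) by (simp add: PiE_iff)
    have "openin ?Y (\<Pi>\<^sub>E i\<in>UNIV. X i)"
    proof (rule product_topology_basis)
      show "openin Z (X i)" for i using opZ by (simp add: X_def)
      have "{i. X i \<noteq> topspace Z} \<subseteq> {..?K}" by (auto simp: X_def)
      then show "finite {i. X i \<noteq> topspace Z}" using finite_subset by blast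
    qed
    moreover have "q0 \<in> (\<Pi>\<^sub>E i\<in>UNIV. X i)" using q0T by (simp add: PiE_iff X_def mem_lphi_pre)
    moreover have "(\<Pi>\<^sub>E i\<in>UNIV. X i) \<subseteq> ?L"
    proof
      fix q assume q: "q \<in> (\<Pi>\<^sub>E i\<in>UNIV. X i)"
      have qi: "q i \<in> X i" for i using q by (simp add: PiE_iff)
      have qT: "q i \<in> ?T" for i
        using qi[of i] lphi_subset[of \<gamma> ?T "pre (\<gamma> (q0 i)) ?K"] by (auto simp: X_def split: if_splits)
      have agree: "\<gamma> (q i) j = \<gamma> (q0 i) j" if "i \<le> ?K" "j < ?K" for i j
        using qi[of i] that by (simp add: X_def mem_lphi_pre)
      have "psiw \<gamma> q m = psiw \<gamma> q0 m" if "m < ?K" for m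
        using psiw_same_prefix[of ?K \<gamma> q q0 m, OF agree that] .
      moreover have "q \<in> topspace ?Y" using qT by (simp add: PiE_iff)
      ultimately show "q \<in> ?L" using inL unfolding lphi_def by simp
    qed
    ultimately show ?thesis by blast
  qed
  then show ?thesis by (subst openin_subopen) simp
qed

lemma psiw_PE:
  assumes pa: "PA \<gamma> Z"
  shows "PE (psiw \<gamma>) (product_topology (\<lambda>_. Z) UNIV)"
  unfolding PE_def
proof (intro ballI allI impI)
  let ?Y = "product_topology (\<lambda>_::nat. Z) UNIV"
  let ?T = "topspace Z"
  fix q W assume q: "q \<in> topspace ?Y" and W: "is_neighbourhood ?Y q W"
  have qT: "q i \<in> ?T" for i using q by (simp add: PiE_iff)
  obtain V where V: "openin ?Y V" "q \<in> V" "V \<subseteq> W" using W unfolding is_neighbourhood_def by blast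
  obtain X where X: "q \<in> (\<Pi>\<^sub>E i\<in>UNIV. X i)" "\<And>i. openin Z (X i)" "finite {i. X i \<noteq> ?T}"
      "(\<Pi>\<^sub>E i\<in>UNIV. X i) \<subseteq> V"
    using product_topology_open_contains_basis[OF V(1) V(2)] by auto
  obtain K where K: "{i. X i \<noteq> ?T} \<subseteq> {..<K}" using finite_nat_bounded[OF X(3)] by blast
  have qX: "q i \<in> X i" for i using X(1) by (simp add: PiE_iff)
  have nb: "is_neighbourhood Z (q i) (X i)" for i
    unfolding is_neighbourhood_def using X(2)[of i] qX[of i] openin_subset[OF X(2)[of i]] by blast
  have "\<forall>i. \<exists>M. \<forall>d\<ge>M. good \<gamma> ?T (q i) (X i) d"
    using pa qT nb unfolding PA_def by blast
  then obtain Mf where Mf: "\<And>i d. d \<ge> Mf i \<Longrightarrow> good \<gamma> ?T (q i) (X i) d"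
    using choice[of "\<lambda>i M. \<forall>d\<ge>M. good \<gamma> ?T (q i) (X i) d"] by blast
  define M where "M = K + (\<Sum>i<K. Mf i)"
  show "\<exists>M. \<forall>n\<ge>M. good (psiw \<gamma>) (topspace ?Y) q W (2 * n)"
  proof (intro exI[of _ M] allI impI)
    fix n assume n: "M \<le> n"
    have Kn: "K \<le> n" using n by (simp add: M_def)
    have dM: "Mf i \<le> n - (i - 1)" if "i < K" for i
    proof -
      have "Mf i \<le> (\<Sum>i<K. Mf i)" using that by (intro member_le_sum) auto
      then show ?thesis using n that by (simp add: M_def)
    qed
    have "\<forall>i. \<exists>N. i < K \<longrightarrow> (\<forall>s\<in>?T. (\<forall>j<n - (i - 1). \<gamma> s j = \<gamma> (q i) j) \<and> N \<le> \<gamma> s (n - (i - 1)) \<longrightarrow> s \<in> X i)"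
    proof
      fix i
      show "\<exists>N. i < K \<longrightarrow> (\<forall>s\<in>?T. (\<forall>j<n - (i - 1). \<gamma> s j = \<gamma> (q i) j) \<and> N \<le> \<gamma> s (n - (i - 1)) \<longrightarrow> s \<in> X i)"
      proof (cases "i < K")
        case True
        then show ?thesis using Mf[OF dM[OF True]] unfolding good_def by blast
      qed simp
    qed
    then obtain Nf where Nf: "\<And>i s. i < K \<Longrightarrow> s \<in> ?T \<Longrightarrow> (\<forall>j<n - (i - 1). \<gamma> s j = \<gamma> (q i) j) \<Longrightarrow>
        Nf i \<le> \<gamma> s (n - (i - 1)) \<Longrightarrow> s \<in> X i"
      using choice[of "\<lambda>i N. i < K \<longrightarrow> (\<forall>s\<in>?T. (\<forall>j<n - (i - 1). \<gamma> s j = \<gamma> (q i) j) \<and> N \<le> \<gamma> s (n - (i - 1)) \<longrightarrow> s \<in> X i)"]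
      by blast
    define N where "N = (\<Sum>i<K. Nf i)"
    have "\<forall>w\<in>topspace ?Y. (\<forall>m<2 * n. psiw \<gamma> w m = psiw \<gamma> q m) \<and> N \<le> psiw \<gamma> w (2 * n) \<longrightarrow> w \<in> W"
    proof (intro ballI impI)
      fix w assume w: "w \<in> topspace ?Y" and h: "(\<forall>m<2 * n. psiw \<gamma> w m = psiw \<gamma> q m) \<and> N \<le> psiw \<gamma> w (2 * n)"
      have wT: "w i \<in> ?T" for i using w by (simp add: PiE_iff)
      have "w i \<in> X i" for i
      proof (cases "i < K")
        case False
        then have "X i = ?T" using K by auto
        then show ?thesis using wT by simp
      next
        case True
        have ag: "\<forall>j<n - (i - 1). \<gamma> (w i) j = \<gamma> (q i) j"
        proof (intro allI impI)
          fix j assume "j < n - (i - 1)"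
          then have "j + (i - 1) < n" by simp
          then show "\<gamma> (w i) j = \<gamma> (q i) j" using psiw_agree[of n \<gamma> w q j i] h by blast
        qed
        have iK: "i < Suc (Suc n)" using True Kn by simp
        have "psiw \<gamma> w (2 * n) = fst (enc n (tl' \<gamma> n w))" by (simp add: psiw_def)
        also have "\<dots> \<le> tl' \<gamma> n w ! i" by (rule enc_fst_le) (simp_all add: iK)
        also have "\<dots> = \<gamma> (w i) (n - (i - 1))" using iK by (simp add: nth_tl')
        finally have "psiw \<gamma> w (2 * n) \<le> \<gamma> (w i) (n - (i - 1))" .
        moreover have "Nf i \<le> N" unfolding N_def using True by (intro member_le_sum) auto
        ultimately have "Nf i \<le> \<gamma> (w i) (n - (i - 1))" using h by linarith
        then show ?thesis using Nf[OF True wT ag] by blast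
      qed
      then have "w \<in> (\<Pi>\<^sub>E i\<in>UNIV. X i)" by (simp add: PiE_iff)
      then show "w \<in> W" using X(4) V(3) by blast
    qed
    then show "good (psiw \<gamma>) (topspace ?Y) q W (2 * n)" unfolding good_def by blast
  qed
qed

definition w :: "nat \<Rightarrow> real" where "w n = (1/2) ^ n"

lemma w_pos: "0 < w n" by (simp add: w_def)
lemma w_Suc: "w (Suc n) = w n / 2" by (simp add: w_def)
lemma w_0[simp]: "w 0 = 1" by (simp add: w_def)
lemma w_add: "w (m + n) = w m * w n" by (simp add: w_def power_add)
lemma w_mono: "m \<le> n \<Longrightarrow> w n \<le> w m"
  unfolding w_def by (rule power_decreasing) auto
lemma w_le1: "w n \<le> 1" using w_mono[of 0 n] by simp
lemma w_small: "0 < e \<Longrightarrow> \<exists>n. w n < e"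
  unfolding w_def by (rule real_arch_pow_inv) auto

definition lam :: "nat list \<Rightarrow> real" where "lam x = w (sum_list x + length x)"
definition alp :: "nat list \<Rightarrow> real" where
  "alp x = (\<Sum>j<length x. lam (take j x) * (1 - w (x ! j)))"

lemma lam_Nil[simp]: "lam [] = 1" by (simp add: lam_def)
lemma alp_Nil[simp]: "alp [] = 0" by (simp add: alp_def)
lemma lam_pos: "0 < lam x" by (simp add: lam_def w_pos)
lemma lam_snoc: "lam (x @ [i]) = lam x * w (Suc i)"
proof -
  have "sum_list (x @ [i]) + length (x @ [i]) = (sum_list x + length x) + Suc i" by simp
  then show ?thesis unfolding lam_def by (simp only: w_add)
qed
lemma lam_le: "lam x \<le> w (length x)"
  unfolding lam_def by (rule w_mono) simp

lemma alp_snoc: "alp (x @ [i]) = alp x + lam x * (1 - w i)"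
proof -
  have "alp (x @ [i]) = (\<Sum>j<Suc (length x). lam (take j (x @ [i])) * (1 - w ((x @ [i]) ! j)))"
    by (simp add: alp_def)
  also have "\<dots> = (\<Sum>j<length x. lam (take j (x @ [i])) * (1 - w ((x @ [i]) ! j)))
      + lam (take (length x) (x @ [i])) * (1 - w ((x @ [i]) ! length x))"
    by (rule sum.lessThan_Suc)
  also have "(\<Sum>j<length x. lam (take j (x @ [i])) * (1 - w ((x @ [i]) ! j))) = alp x"
    unfolding alp_def by (rule sum.cong) (auto simp: nth_append)
  finally show ?thesis by simp
qed

lemma unit_part: assumes "0 \<le> u" "u < 1" shows "\<exists>i. 1 - w i \<le> u \<and> u < 1 - w (Suc i)"
proof -
  have "\<exists>n. w n < 1 - u" using assms by (intro w_small) simp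
  define k where "k = (LEAST n. w n < 1 - u)"
  have k: "w k < 1 - u" unfolding k_def using \<open>\<exists>n. w n < 1 - u\<close> by (rule LeastI_ex)
  have k0: "k \<noteq> 0" using k assms by (intro notI) simp
  then obtain i where i: "k = Suc i" by (cases k) auto
  have "\<not> w i < 1 - u"
  proof
    assume "w i < 1 - u"
    then have "k \<le> i" unfolding k_def by (rule Least_le)
    then show False using i by simp
  qed
  then show ?thesis using k i by (intro exI[of _ i]) simp
qed

definition I :: "real \<Rightarrow> real \<Rightarrow> nat \<Rightarrow> real set" where
  "I a lm i = {a + lm * (1 - w i) ..< a + lm * (1 - w (Suc i))}"

lemma I_sub: "0 < lm \<Longrightarrow> I a lm i \<subseteq> {a..<a+lm}"
proof
  fix r assume lm: "0 < lm" and r: "r \<in> I a lm i"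
  have "0 \<le> lm * (1 - w i)" using lm w_le1[of i] by simp
  moreover have "lm * (1 - w (Suc i)) < lm" using lm w_pos[of "Suc i"] by simp
  ultimately show "r \<in> {a..<a+lm}" using r unfolding I_def by simp
qed

lemma I_cover: "0 < lm \<Longrightarrow> r \<in> {a..<a+lm} \<Longrightarrow> \<exists>i. r \<in> I a lm i"
proof -
  assume lm: "0 < lm" and r: "r \<in> {a..<a+lm}"
  define u where "u = (r - a) / lm"
  have "0 \<le> u" "u < 1" using lm r by (auto simp: u_def field_simps)
  then obtain i where i: "1 - w i \<le> u" "u < 1 - w (Suc i)" using unit_part by blast
  have "r = a + lm * u" using lm by (simp add: u_def field_simps)
  then have "a + lm * (1 - w i) \<le> r" "r < a + lm * (1 - w (Suc i))"
    using i lm by (simp_all add: mult_left_mono)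
  then show ?thesis unfolding I_def by auto
qed

lemma I_disj: assumes lm: "0 < lm" and ij: "i \<noteq> j" shows "I a lm i \<inter> I a lm j = {}"
proof -
  have *: "I a lm i \<inter> I a lm j = {}" if "i < j" for i j
  proof -
    have "w j \<le> w (Suc i)" using that by (intro w_mono) simp
    then have "a + lm * (1 - w (Suc i)) \<le> a + lm * (1 - w j)" using lm by simp
    then show ?thesis unfolding I_def by auto
  qed
  show ?thesis using ij *[of i j] *[of j i] by (cases "i < j") auto
qed

fun sl :: "nat list \<Rightarrow> real set" where
  "sl [] = UNIV"
| "sl (z # x) = {of_int (int_decode z) + alp x ..< of_int (int_decode z) + alp x + lam x}"

lemma sl_snoc: "sl (z # x @ [i]) = I (of_int (int_decode z) + alp x) (lam x) i"
proof -
  have "w i = 2 * w (Suc i)" by (simp add: w_Suc)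
  then have "alp x + lam x * (1 - w i) + lam x * w (Suc i) = alp x + lam x * (1 - w (Suc i))"
    by (simp add: algebra_simps)
  then show ?thesis by (simp add: I_def alp_snoc lam_snoc add.assoc)
qed

lemma locally_strict_intro:
  assumes "\<And>x. l x = (\<Union>n. l (x @ [n]))" "\<And>x n m. n \<noteq> m \<Longrightarrow> l (x @ [n]) \<inter> l (x @ [m]) = {}"
  shows "locally_strict l"
  unfolding locally_strict_def
proof (intro allI impI conjI ballI)
  fix x
  show "l x = \<Union> (l ` sons x)" unfolding sons_eq using assms(1)[of x] by (simp add: image_image)
  fix s t assume "s \<in> sons x" "t \<in> sons x" "s \<noteq> t"
  then obtain n m where "s = x @ [n]" "t = x @ [m]" "n \<noteq> m" unfolding sons_eq by auto
  then show "l s \<inter> l t = {}" using assms(2) by simp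
qed

lemma sorgenfrey_topspace[simp]: "topspace sorgenfrey = UNIV"
proof -
  have "r \<in> \<Union> {{a..<b} | a b. True}" for r :: real
    by (rule UnionI[of "{r..<r+1}"]) auto
  then show ?thesis unfolding sorgenfrey_def topology_generated_by_topspace by blast
qed

lemma sorgenfrey_open_Ico: "openin sorgenfrey {a..<b}"
  unfolding sorgenfrey_def by (rule topology_generated_by_Basis) blast

lemma sl_open: "openin sorgenfrey (sl x)"
proof (cases x)
  case Nil
  then show ?thesis using openin_topspace[of sorgenfrey] by simp
next
  case (Cons z x')
  then show ?thesis by (simp add: sorgenfrey_open_Ico)
qed

lemma sl_cover: "sl x = (\<Union>n. sl (x @ [n]))"
proof (cases x)
  case Nil
  have R: "r \<in> sl [int_encode \<lfloor>r\<rfloor>]" for r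
    by simp
  have "r \<in> (\<Union>n. sl ([] @ [n]))" for r
    using R[of r] by (simp only: append_Nil) (rule UN_I[OF UNIV_I])
  then have "UNIV \<subseteq> (\<Union>n. sl ([] @ [n]))" by (intro subsetI)
  then show ?thesis unfolding Nil sl.simps(1) by (rule subset_antisym[OF _ subset_UNIV])
next
  case (Cons z x')
  let ?a = "of_int (int_decode z) + alp x'"
  have "sl x = {?a..<?a + lam x'}" using Cons by simp
  also have "\<dots> = (\<Union>n. I ?a (lam x') n)"
  proof (rule equalityI)
    show "{?a..<?a + lam x'} \<subseteq> (\<Union>n. I ?a (lam x') n)"
    proof
      fix r assume "r \<in> {?a..<?a + lam x'}"
      then obtain i where "r \<in> I ?a (lam x') i" using I_cover[OF lam_pos] by blast
      then show "r \<in> (\<Union>n. I ?a (lam x') n)" by (rule UN_I[OF UNIV_I])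
    qed
    show "(\<Union>n. I ?a (lam x') n) \<subseteq> {?a..<?a + lam x'}"
      by (rule UN_least) (rule I_sub[OF lam_pos])
  qed
  also have "\<dots> = (\<Union>n. sl (x @ [n]))" using Cons by (simp only: append_Cons sl_snoc)
  finally show ?thesis .
qed

lemma sl_disj: "n \<noteq> m \<Longrightarrow> sl (x @ [n]) \<inter> sl (x @ [m]) = {}"
proof (cases x)
  case Nil
  assume nm: "n \<noteq> m"
  then have ne: "int_decode n \<noteq> int_decode m" by (simp add: int_decode_eq)
  have F: False if "r \<in> sl [n]" "r \<in> sl [m]" for r
  proof -
    have "\<lfloor>r\<rfloor> = int_decode n" using that(1) by (simp add: floor_eq_iff)
    moreover have "\<lfloor>r\<rfloor> = int_decode m" using that(2) by (simp add: floor_eq_iff)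
    ultimately show False using ne by simp
  qed
  have "sl [n] \<inter> sl [m] = {}" using F by blast
  then show ?thesis using Nil by simp
next
  case (Cons z x')
  assume "n \<noteq> m"
  then show ?thesis using Cons I_disj[OF lam_pos] by (simp only: append_Cons sl_snoc)
qed

lemma pre_Suc_Cons: "pre f (Suc n) = f 0 # pre (\<lambda>i. f (Suc i)) n"
  by (simp add: pre_def upt_conv_Cons map_Suc_upt[symmetric] del: upt_Suc)

lemma sl_branch: "\<exists>p. \<Inter> (sl ` range (pre f)) = {p}"
proof -
  define g where "g i = f (Suc i)" for i
  define c where "c = (of_int (int_decode (f 0)) :: real)"
  define A where "A n = c + alp (pre g n)" for n
  define L where "L n = lam (pre g n)" for n
  define B where "B n = A n + L n" for n
  have slS: "sl (pre f (Suc n)) = {A n..<B n}" for n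
    by (simp add: pre_Suc_Cons g_def[symmetric] A_def B_def L_def c_def)
  have Lpos: "0 < L n" for n by (simp add: L_def lam_pos)
  have Lw: "L n \<le> w n" for n unfolding L_def using lam_le[of "pre g n"] by simp
  have AS: "A (Suc n) = A n + L n * (1 - w (g n))" for n
    unfolding A_def L_def pre_Suc alp_snoc by (simp only: add.assoc)
  have LS: "L (Suc n) = L n * w (Suc (g n))" for n
    unfolding L_def pre_Suc lam_snoc ..
  have Ainc: "A n \<le> A (Suc n)" for n
  proof -
    have "0 \<le> L n * (1 - w (g n))" using Lpos[of n] w_le1[of "g n"] by (intro mult_nonneg_nonneg) simp_all
    then show ?thesis unfolding AS by linarith
  qed
  have Bdec: "B (Suc n) < B n" for n
  proof -
    have wg: "w (g n) = 2 * w (Suc (g n))" by (simp add: w_Suc)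
    have "B (Suc n) = A n + L n * (1 - w (Suc (g n)))"
      unfolding B_def AS LS wg by (simp add: algebra_simps)
    moreover have "L n * (1 - w (Suc (g n))) < L n" using Lpos[of n] w_pos[of "Suc (g n)"] by simp
    ultimately show ?thesis unfolding B_def by simp
  qed
  have AB: "A n < B n" for n using Lpos[of n] by (simp add: B_def)
  have Amono: "m \<le> n \<Longrightarrow> A m \<le> A n" for m n
    using Ainc by (rule lift_Suc_mono_le)
  have Bdec': "B (Suc n) \<le> B n" for n using Bdec[of n] by simp
  have Bmono: "m \<le> n \<Longrightarrow> B n \<le> B m" for m n
    using Bdec' by (rule lift_Suc_antimono_le)
  have ABall: "A m < B n" for m n
  proof (cases "m \<le> n")
    case True then show ?thesis using Amono[OF True] AB[of n] by simp
  next
    case False then show ?thesis using Bmono[of n m] AB[of m] by simp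
  qed
  define p where "p = (SUP n. A n)"
  have bdd: "bdd_above (range A)" by (rule bdd_aboveI2[where M="B 0"]) (simp add: less_imp_le[OF ABall])
  have Ap: "A n \<le> p" for n unfolding p_def by (rule cSUP_upper[OF UNIV_I bdd])
  have pB: "p \<le> B n" for n unfolding p_def by (rule cSUP_least) (simp_all add: less_imp_le[OF ABall])
  have pin: "p \<in> sl (pre f n)" for n
  proof (cases n)
    case 0 then show ?thesis by simp
  next
    case (Suc k)
    have "p \<le> B (Suc k)" by (rule pB)
    also have "\<dots> < B k" by (rule Bdec)
    finally show ?thesis using Suc Ap[of k] slS[of k] by simp
  qed
  have uniq: "r = p" if r: "\<And>n. r \<in> sl (pre f n)" for r
  proof (rule ccontr)
    assume "r \<noteq> p"
    then have "0 < \<bar>r - p\<bar>" by simp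
    then obtain n where n: "w n < \<bar>r - p\<bar>" using w_small by blast
    have "r \<in> {A n..<B n}" "p \<in> {A n..<B n}" using r[of "Suc n"] pin[of "Suc n"] slS[of n] by simp_all
    then have "\<bar>r - p\<bar> < L n" by (simp add: B_def abs_less_iff) 
    then show False using n Lw[of n] by simp
  qed
  have "\<Inter> (sl ` range (pre f)) = {p}"
  proof
    show "\<Inter> (sl ` range (pre f)) \<subseteq> {p}"
    proof
      fix r assume "r \<in> \<Inter> (sl ` range (pre f))"
      then have "r \<in> sl (pre f n)" for n by blast
      then show "r \<in> {p}" using uniq by blast
    qed
    show "{p} \<subseteq> \<Inter> (sl ` range (pre f))" using pin by blast
  qed
  then show ?thesis by blast
qed

lemma sl_tree: "baire_foliage_tree sorgenfrey sl"
  unfolding baire_foliage_tree_def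
proof (intro conjI allI)
  show "openin sorgenfrey (sl x)" for x by (rule sl_open)
  show "locally_strict sl" by (rule locally_strict_intro[OF sl_cover sl_disj])
  show "strict_branches sl" unfolding strict_branches_def
  proof (intro allI impI)
    fix B assume "is_branch B"
    then obtain f where "B = range (pre f)" using branch_is_pre by blast
    then show "\<exists>p. \<Inter> (sl ` B) = {p}" using sl_branch by simp
  qed
  show "sl [] = topspace sorgenfrey" by simp
qed

lemma sorgenfrey_nhd:
  assumes "openin sorgenfrey V" "q \<in> V"
  shows "\<exists>e>0. {q..<q+e} \<subseteq> V"
proof -
  have "generate_topology_on {{a..<b} | a b. True} V"
    using assms(1) unfolding sorgenfrey_def by (rule openin_topology_generated_by)
  then show ?thesis using assms(2)
  proof (induction arbitrary: q)
    case Empty then show ?case by simp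
  next
    case (Int a b)
    obtain e1 where e1: "e1 > 0" "{q..<q+e1} \<subseteq> a" using Int by blast
    obtain e2 where e2: "e2 > 0" "{q..<q+e2} \<subseteq> b" using Int by blast
    have "{q..<q + min e1 e2} \<subseteq> {q..<q+e1}" "{q..<q + min e1 e2} \<subseteq> {q..<q+e2}" by auto
    then have "{q..<q + min e1 e2} \<subseteq> a \<inter> b" using e1(2) e2(2) by blast
    then show ?case using e1 e2 by (intro exI[of _ "min e1 e2"]) simp
  next
    case (UN K)
    then obtain k where k: "k \<in> K" "q \<in> k" by blast
    then obtain e where "e > 0" "{q..<q+e} \<subseteq> k" using UN.IH by blast
    then show ?case using k by blast
  next
    case (Basis s)
    then obtain a b where s: "s = {a..<b}" by blast
    then have "q < b" using Basis by simp
    moreover have "{q..<q + (b - q)} \<subseteq> s" using s Basis by auto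
    ultimately show ?case by (intro exI[of _ "b - q"]) simp
  qed
qed

lemma sorg_phi: "\<exists>\<gamma>. bij_betw \<gamma> (topspace sorgenfrey) UNIV \<and> (\<forall>x. openin sorgenfrey (lphi \<gamma> (topspace sorgenfrey) x))
   \<and> PA \<gamma> sorgenfrey"
proof -
  obtain \<gamma> where bij: "bij_betw \<gamma> (topspace sorgenfrey) UNIV" and eq: "sl = lphi \<gamma> (topspace sorgenfrey)"
    using tree_to_phi[OF sl_tree] by blast
  have op: "openin sorgenfrey (lphi \<gamma> (topspace sorgenfrey) x)" for x using sl_open eq by metis
  have pa: "PA \<gamma> sorgenfrey" unfolding PA_def
  proof (intro ballI allI impI)
    fix q U assume U: "is_neighbourhood sorgenfrey q U"
    obtain V where V: "openin sorgenfrey V" "q \<in> V" "V \<subseteq> U" using U unfolding is_neighbourhood_def by blast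
    obtain e where e: "e > 0" "{q..<q+e} \<subseteq> V" using sorgenfrey_nhd[OF V(1) V(2)] by blast
    obtain M where M: "w M < e" using w_small[OF e(1)] by blast
    show "\<exists>M. \<forall>n\<ge>M. good \<gamma> (topspace sorgenfrey) q U n"
    proof (intro exI[of _ "Suc M"] allI impI)
      fix n assume n: "Suc M \<le> n"
      then obtain m where m: "n = Suc m" "M \<le> m" by (cases n) auto
      let ?x = "pre (\<gamma> q) n"
      let ?x' = "pre (\<lambda>i. \<gamma> q (Suc i)) m"
      define a where "a = of_int (int_decode (\<gamma> q 0)) + alp ?x'"
      define lm where "lm = lam ?x'"
      have xe: "?x = \<gamma> q 0 # ?x'" unfolding m(1) by (rule pre_Suc_Cons)
      have "q \<in> lphi \<gamma> (topspace sorgenfrey) ?x" by (simp add: mem_lphi_pre)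
      then have "q \<in> sl ?x" using eq by simp
      then have qa: "a \<le> q" "q < a + lm" unfolding xe by (simp_all add: a_def lm_def)
      have lmpos: "0 < lm" by (simp add: lm_def lam_pos)
      have "lm \<le> w m" unfolding lm_def using lam_le[of ?x'] by simp
      also have "\<dots> \<le> w M" using m(2) by (rule w_mono)
      finally have lme: "lm < e" using M by simp
      have "0 < (a + lm - q) / lm" using qa lmpos by simp
      then obtain N where N: "w N < (a + lm - q) / lm" using w_small by blast
      have sub: "sl (?x @ [i]) \<subseteq> U" if i: "N \<le> i" for i
      proof
        fix r assume "r \<in> sl (?x @ [i])"
        then have r: "r \<in> I a lm i" unfolding xe a_def lm_def by (simp only: append_Cons sl_snoc)
        have "lm * w i \<le> lm * w N" using w_mono[OF i] lmpos by simp
        also have "\<dots> < a + lm - q" using N lmpos by (simp add: field_simps)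
        finally have h1: "q < a + lm * (1 - w i)" by (simp add: algebra_simps)
        have h2: "a + lm * (1 - w (Suc i)) < a + lm" using lmpos w_pos[of "Suc i"] by simp
        have r1: "a + lm * (1 - w i) \<le> r" "r < a + lm * (1 - w (Suc i))" using r unfolding I_def by auto
        have "q \<le> r" "r < q + e" using h1 h2 r1 qa lme by linarith+
        then show "r \<in> U" using e(2) V(3) by auto
      qed
      have "\<forall>s\<in>topspace sorgenfrey. (\<forall>i<n. \<gamma> s i = \<gamma> q i) \<and> N \<le> \<gamma> s n \<longrightarrow> s \<in> U"
      proof (intro ballI impI)
        fix s assume s: "s \<in> topspace sorgenfrey" "(\<forall>i<n. \<gamma> s i = \<gamma> q i) \<and> N \<le> \<gamma> s n"
        then have "s \<in> lphi \<gamma> (topspace sorgenfrey) (?x @ [\<gamma> s n])"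
          by (simp add: lphi_snoc mem_lphi_pre)
        then have "s \<in> sl (?x @ [\<gamma> s n])" using eq by simp
        then show "s \<in> U" using sub s by blast
      qed
      then show "good \<gamma> (topspace sorgenfrey) q U n" unfolding good_def by blast
    qed
  qed
  show ?thesis using bij op pa by blast
qed

lemma baire_topspace[simp]: "topspace baire_space = UNIV"
  by (auto simp: baire_space_def PiE_iff)

lemma baire_open: "openin baire_space (lphi (\<lambda>s. s) (topspace baire_space) x)"
proof -
  define X where "X i = (if i < length x then {x ! i} else UNIV)" for i
  have eq: "lphi (\<lambda>s. s) (topspace baire_space) x = (\<Pi>\<^sub>E i\<in>UNIV. X i)"
  proof (intro set_eqI iffI)
    fix s assume "s \<in> lphi (\<lambda>s. s) (topspace baire_space) x"
    then show "s \<in> (\<Pi>\<^sub>E i\<in>UNIV. X i)" by (auto simp: lphi_def PiE_iff X_def)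
  next
    fix s assume h: "s \<in> (\<Pi>\<^sub>E i\<in>UNIV. X i)"
    have si: "s i \<in> X i" for i using h by (simp add: PiE_iff)
    have "s i = x ! i" if "i < length x" for i using that si[of i] by (simp add: X_def)
    then show "s \<in> lphi (\<lambda>s. s) (topspace baire_space) x" by (simp add: lphi_def)
  qed
  have "openin baire_space (\<Pi>\<^sub>E i\<in>UNIV. X i)"
    unfolding baire_space_def
  proof (rule product_topology_basis)
    show "openin (discrete_topology UNIV) (X i)" for i by simp
    have "{i. X i \<noteq> topspace (discrete_topology (UNIV::nat set))} \<subseteq> {..<length x}" by (auto simp: X_def)
    then show "finite {i. X i \<noteq> topspace (discrete_topology (UNIV::nat set))}" using finite_subset by blast
  qed
  then show ?thesis by (subst eq)
qed

lemma baire_PA: "PA (\<lambda>s. s) baire_space"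
  unfolding PA_def
proof (intro ballI allI impI)
  fix q :: "nat \<Rightarrow> nat" and U assume U: "is_neighbourhood baire_space q U"
  obtain V where V: "openin baire_space V" "q \<in> V" "V \<subseteq> U" using U unfolding is_neighbourhood_def by blast
  obtain X where X: "q \<in> (\<Pi>\<^sub>E i\<in>UNIV. X i)" "finite {i. X i \<noteq> topspace (discrete_topology (UNIV::nat set))}"
      "(\<Pi>\<^sub>E i\<in>UNIV. X i) \<subseteq> V"
    using product_topology_open_contains_basis[OF V(1)[unfolded baire_space_def] V(2)] by blast
  obtain K where K: "{i. X i \<noteq> topspace (discrete_topology (UNIV::nat set))} \<subseteq> {..<K}"
    using finite_nat_bounded[OF X(2)] by blast
  show "\<exists>M. \<forall>n\<ge>M. good (\<lambda>s. s) (topspace baire_space) q U n"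
  proof (intro exI[of _ K] allI impI)
    fix n assume n: "K \<le> n"
    have "\<forall>s\<in>topspace baire_space. (\<forall>i<n. s i = q i) \<and> 0 \<le> s n \<longrightarrow> s \<in> U"
    proof (intro ballI impI)
      fix s :: "nat \<Rightarrow> nat" assume "(\<forall>i<n. s i = q i) \<and> 0 \<le> s n"
      then have sq: "\<forall>i<n. s i = q i" by simp
      have "s i \<in> X i" for i
      proof (cases "i < K")
        case True
        then have "s i = q i" using sq n by simp
        then show ?thesis using X(1) by (simp add: PiE_iff)
      next
        case False
        then have "X i = UNIV" using K by auto
        then show ?thesis by simp
      qed
      then have "s \<in> (\<Pi>\<^sub>E i\<in>UNIV. X i)" by (simp add: PiE_iff)
      then show "s \<in> U" using X(3) V(3) by blast
    qed
    then show "good (\<lambda>s. s) (topspace baire_space) q U n" unfolding good_def by blast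
  qed
qed

theorem corollary22:
  fixes X :: "'a topology"
  assumes "has_pi_tree X"
  shows "has_pi_tree (prod_topology X baire_space) \<and>
         has_pi_tree (prod_topology X sorgenfrey) \<and>
         has_pi_tree (prod_topology X sorgenfrey_power)"
proof -
  obtain l where l: "pi_tree X l" using assms unfolding has_pi_tree_def by blast
  then have bt: "baire_foliage_tree X l" and gi: "grows_into l X" unfolding pi_tree_def by auto
  obtain \<phi> where bX: "bij_betw \<phi> (topspace X) UNIV" and leq: "l = lphi \<phi> (topspace X)"
    using tree_to_phi[OF bt] by blast
  have opX: "openin X (lphi \<phi> (topspace X) x)" for x
    using bt leq unfolding baire_foliage_tree_def by metis
  have gi': "grows_into (lphi \<phi> (topspace X)) X" using gi leq by simp
  have grX: "\<exists>n. good \<phi> (topspace X) p U n" if "p \<in> topspace X" "is_neighbourhood X p U" for p U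
    using grows_to_good[OF bX gi' that] .
  have 1: "has_pi_tree (prod_topology X baire_space)"
  proof (rule prod_pi[OF bX opX grX])
    show "bij_betw (\<lambda>s. s) (topspace baire_space) UNIV" by (simp add: bij_betw_def)
    show "openin baire_space (lphi (\<lambda>s. s) (topspace baire_space) x)" for x by (rule baire_open)
    show "PE (\<lambda>s. s) baire_space" using baire_PA by (rule PA_PE)
  qed
  obtain \<gamma> where g: "bij_betw \<gamma> (topspace sorgenfrey) UNIV"
      "\<And>x. openin sorgenfrey (lphi \<gamma> (topspace sorgenfrey) x)" "PA \<gamma> sorgenfrey"
    using sorg_phi by blast
  have 2: "has_pi_tree (prod_topology X sorgenfrey)"
    by (rule prod_pi[OF bX opX grX g(1) g(2) PA_PE[OF g(3)]])
  have 3: "has_pi_tree (prod_topology X sorgenfrey_power)"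
    unfolding sorgenfrey_power_def
  proof (rule prod_pi[OF bX opX grX])
    show "bij_betw (psiw \<gamma>) (topspace (product_topology (\<lambda>_. sorgenfrey) UNIV)) UNIV"
      using psiw_bij[OF g(1)] by simp
    show "openin (product_topology (\<lambda>_. sorgenfrey) UNIV)
        (lphi (psiw \<gamma>) (topspace (product_topology (\<lambda>_. sorgenfrey) UNIV)) x)" for x
      by (rule psiw_open[OF g(2)])
    show "PE (psiw \<gamma>) (product_topology (\<lambda>_. sorgenfrey) UNIV)" by (rule psiw_PE[OF g(3)])
  qed
  show ?thesis using 1 2 3 by blast
qed

end
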